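(* Let $W\in\mathcal{C}$ be a local minimiser of $\mathcal{L}$ in $\mathcal{C}$, i.e. there is $\delta>0$ such that $\mathcal{L}(W)\le\mathcal{L}(U)$ for all $U\in\mathcal{C}$ with $\|U-W\|_{L^2}<\delta$. Then $W$ solves the front equation $W=\mathcal{T}[W]$.
   Context: Let $\Phi:\mathbb{R}\to\mathbb{R}$ be twice continuously differentiable with: $\Phi'(-1)=-1$, $\Phi'(1)=1$; $\Phi''\ge0$ on $[-1,1]$; $\Phi(-1)=\Phi(1)$; $\Phi''(-1)<1$, $\Phi''(1)<1$; and $g_\Phi(w):=\int_{-1}^w(v-\Phi'(v))\,dv>0$ for all $w\in(-1,1)$. $(\mathcal{A}U)(\varphi)=\int_{\varphi-1/2}^{\varphi+1/2}U(s)\,ds$; $W_{\rm sh}(\varphi)=\mathrm{sgn}(\varphi)$; $\mathcal{H}=\{W \text{ measurable}: W_{\rm sh}-W\in L^2(\mathbb{R})\}$; $\mathcal{T}[W]=\mathcal{A}(\Phi'(\mathcal{A}W))$; $\mathcal{L}(W)=\int_{\mathbb{R}}(\tfrac12W^2-\Phi(\mathcal{A}W))-(\tfrac12W_{\rm sh}^2-\Phi(\mathcal{A}W_{\rm sh}))\,d\varphi$. $\mathcal{C}$ is the set of $W\in\mathcal{H}$ that are a.e. equal to a nondecreasing function with $W(\varphi)\to-1$ as $\varphi\to-\infty$ and $W(\varphi)\to1$ as $\varphi\to+\infty$. *)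

theory Defs
  imports "HOL-Analysis.Analysis"
begin

definition avg :: "(real \<Rightarrow> real) \<Rightarrow> real \<Rightarrow> real" where
  "avg U \<phi> = (LINT s:{\<phi> - 1/2 .. \<phi> + 1/2}|lborel. U s)"

definition Wsh :: "real \<Rightarrow> real" where
  "Wsh \<phi> = sgn \<phi>"

definition Hspace :: "(real \<Rightarrow> real) set" where
  "Hspace = {W. W \<in> borel_measurable lborel \<and>
                integrable lborel (\<lambda>\<phi>. (Wsh \<phi> - W \<phi>)\<^sup>2)}"

definition L2norm :: "(real \<Rightarrow> real) \<Rightarrow> real" where
  "L2norm f = sqrt (integral\<^sup>L lborel (\<lambda>\<phi>. (f \<phi>)\<^sup>2))"

definition Top :: "(real \<Rightarrow> real) \<Rightarrow> (real \<Rightarrow> real) \<Rightarrow> real \<Rightarrow> real" where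
  "Top dPhi W = avg (\<lambda>\<phi>. dPhi (avg W \<phi>))"

definition Lfun :: "(real \<Rightarrow> real) \<Rightarrow> (real \<Rightarrow> real) \<Rightarrow> real" where
  "Lfun Phi W = integral\<^sup>L lborel (\<lambda>\<phi>.
      (1/2 * (W \<phi>)\<^sup>2 - Phi (avg W \<phi>)) - (1/2 * (Wsh \<phi>)\<^sup>2 - Phi (avg Wsh \<phi>)))"

definition Ccone :: "(real \<Rightarrow> real) set" where
  "Ccone = {W \<in> Hspace. \<exists>f. mono f \<and> (AE \<phi> in lborel. W \<phi> = f \<phi>) \<and>
                 (f \<longlongrightarrow> -1) at_bot \<and> (f \<longlongrightarrow> 1) at_top}"

end

theory Submission
  imports Defs
begin



lemma ind_int: "integrable lborel (indicat_real {a..b::real})"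
  by (rule integrable_real_indicator) (auto simp: emeasure_lborel_Icc_eq)

lemma ind_integral: "(LBINT x. indicat_real {a..b::real} x) = (if a \<le> b then b - a else 0)"
  by (simp add: integral_indicator)



lemma avg_shift: "avg q x = (LBINT u. indicator {-1/2..1/2::real} u * q (x + u))"
proof -
  have "avg q x = (LBINT s. indicator {x-1/2..x+1/2} s * q s)"
    unfolding avg_def set_lebesgue_integral_def by simp
  also have "\<dots> = (LBINT u. indicator {x-1/2..x+1/2} (x + 1*u) * q (x + 1*u))"
    using lborel_integral_real_affine[of 1 "\<lambda>s. indicator {x-1/2..x+1/2} s * q s" x] by simp
  also have "\<dots> = (LBINT u. indicator {-1/2..1/2::real} u * q (x + u))"
    by (rule Bochner_Integration.integral_cong) (auto simp: indicator_def)
  finally show ?thesis .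
qed

lemma int_ind:
  fixes q :: "real \<Rightarrow> real" and a b x B :: real
  assumes qm: "q \<in> borel_measurable borel" and qb: "\<And>y. \<bar>q y\<bar> \<le> B"
  shows "integrable lborel (\<lambda>u. indicator {a..b} u * q (x + u))"
proof (rule Bochner_Integration.integrable_bound[where f="\<lambda>u. B * indicator {a..b} u :: real"])
  show "integrable lborel (\<lambda>u. B * indicator {a..b} u)"
    by (intro integrable_mult_right) (rule ind_int)
  show "(\<lambda>u. indicator {a..b} u * q (x + u)) \<in> borel_measurable lborel"
    using qm by measurable
  show "AE u in lborel. norm (indicator {a..b} u * q (x + u)) \<le> norm (B * indicator {a..b} u :: real)"
    using qb[of "x+_"] by (auto simp: indicator_def intro!: AE_I2) (smt (verit) qb)
qed

lemma avg_upper: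
  fixes q :: "real \<Rightarrow> real"
  assumes m: "mono q" and b: "\<And>y. \<bar>q y\<bar> \<le> B"
  assumes that: "c \<ge> 1/2"
  shows "avg q x \<le> q (x + c)"
proof -
  have qm: "q \<in> borel_measurable borel" using m by (rule borel_measurable_mono)
  have "avg q x = (LBINT u. indicator {-1/2..1/2::real} u * q (x + u))" by (rule avg_shift)
  also have "\<dots> \<le> (LBINT u. q (x + c) * indicator {-1/2..1/2::real} u)"
    apply (rule integral_mono[OF int_ind[OF qm b] integrable_mult_right[OF ind_int]])
    using that by (auto simp: indicator_def intro!: monoD[OF m])
  also have "\<dots> = q (x + c)" by (simp add: ind_integral)
  finally show ?thesis .
qed

lemma avg_lower:
  fixes q :: "real \<Rightarrow> real"
  assumes m: "mono q" and b: "\<And>y. \<bar>q y\<bar> \<le> B"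
  assumes that: "c \<ge> 1/2"
  shows "q (x - c) \<le> avg q x"
proof -
  have qm: "q \<in> borel_measurable borel" using m by (rule borel_measurable_mono)
  have "q (x - c) = (LBINT u. q (x - c) * indicator {-1/2..1/2::real} u)" by (simp add: ind_integral)
  also have "\<dots> \<le> (LBINT u. indicator {-1/2..1/2::real} u * q (x + u))"
    apply (rule integral_mono[OF integrable_mult_right[OF ind_int] int_ind[OF qm b]])
    using that by (auto simp: indicator_def intro!: monoD[OF m])
  also have "\<dots> = avg q x" by (rule avg_shift[symmetric])
  finally show ?thesis .
qed

lemma avg_mono:
  fixes q :: "real \<Rightarrow> real"
  assumes m: "mono q" and b: "\<And>y. \<bar>q y\<bar> \<le> B"
  shows "mono (avg q)"
proof (rule monoI)
  fix x y :: real assume "x \<le> y"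
  have qm: "q \<in> borel_measurable borel" using m by (rule borel_measurable_mono)
  show "avg q x \<le> avg q y"
    unfolding avg_shift
    apply (rule integral_mono[OF int_ind[OF qm b] int_ind[OF qm b]])
    using \<open>x \<le> y\<close> by (auto simp: indicator_def intro!: monoD[OF m])
qed

lemma avg_bound:
  fixes q :: "real \<Rightarrow> real"
  assumes qm: "q \<in> borel_measurable borel" and b: "\<And>y. \<bar>q y\<bar> \<le> B"
  shows "\<bar>avg q x\<bar> \<le> B"
proof -
  have "\<bar>avg q x\<bar> \<le> (LBINT u. norm (indicator {-1/2..1/2::real} u * q (x + u)))"
    unfolding avg_shift using integral_norm_bound by (metis real_norm_def)
  also have "\<dots> \<le> (LBINT u. B * indicator {-1/2..1/2::real} u)"
    apply (rule integral_mono[OF integrable_norm[OF int_ind[OF qm b]] integrable_mult_right[OF ind_int]])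
    using b by (auto simp: indicator_def)
  also have "\<dots> = B" by (simp add: ind_integral)
  finally show ?thesis .
qed

lemma avg_lin:
  fixes q1 q2 :: "real \<Rightarrow> real"
  assumes m1: "q1 \<in> borel_measurable borel" and b1: "\<And>y. \<bar>q1 y\<bar> \<le> B1"
  assumes m2: "q2 \<in> borel_measurable borel" and b2: "\<And>y. \<bar>q2 y\<bar> \<le> B2"
  shows "avg (\<lambda>y. q1 y + c * q2 y) x = avg q1 x + c * avg q2 x"
  unfolding avg_shift
  using int_ind[OF m1 b1, of "-1/2" "1/2" x] int_ind[OF m2 b2, of "-1/2" "1/2" x]
  by (simp add: distrib_left mult.left_commute)

lemma shift_top: "filterlim (\<lambda>x::real. x + c) at_top at_top" 
  unfolding filterlim_at_top eventually_at_top_linorder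
proof (intro allI)
  fix Z show "\<exists>N. \<forall>n\<ge>N. Z \<le> n + c" by (rule exI[of _ "Z - c"]) auto
qed

lemma shift_bot: "filterlim (\<lambda>x::real. x + c) at_bot at_bot" 
  unfolding filterlim_at_bot eventually_at_bot_linorder
proof (intro allI)
  fix Z show "\<exists>N. \<forall>n\<le>N. n + c \<le> Z" by (rule exI[of _ "Z - c"]) auto
qed

lemma avg_lim_top:
  fixes q :: "real \<Rightarrow> real"
  assumes m: "mono q" and b: "\<And>y. \<bar>q y\<bar> \<le> B" and l: "(q \<longlongrightarrow> L) at_top"
  shows "(avg q \<longlongrightarrow> L) at_top"
proof (rule tendsto_sandwich[of "\<lambda>x. q (x + (-1/2))" _ _ "\<lambda>x. q (x + 1/2)"])
  show "\<forall>\<^sub>F x in at_top. q (x + - 1 / 2) \<le> avg q x"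
    using avg_lower[OF m b, of "1/2"] by (auto intro!: always_eventually)
  show "\<forall>\<^sub>F x in at_top. avg q x \<le> q (x + 1 / 2)"
    using avg_upper[OF m b, of "1/2"] by (auto intro!: always_eventually)
  show "((\<lambda>x. q (x + - 1 / 2)) \<longlongrightarrow> L) at_top"
    by (rule filterlim_compose[OF l shift_top])
  show "((\<lambda>x. q (x + 1 / 2)) \<longlongrightarrow> L) at_top"
    by (rule filterlim_compose[OF l shift_top])
qed

lemma avg_lim_bot:
  fixes q :: "real \<Rightarrow> real"
  assumes m: "mono q" and b: "\<And>y. \<bar>q y\<bar> \<le> B" and l: "(q \<longlongrightarrow> L) at_bot"
  shows "(avg q \<longlongrightarrow> L) at_bot"
proof (rule tendsto_sandwich[of "\<lambda>x. q (x + (-1/2))" _ _ "\<lambda>x. q (x + 1/2)"])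
  show "\<forall>\<^sub>F x in at_bot. q (x + - 1 / 2) \<le> avg q x"
    using avg_lower[OF m b, of "1/2"] by (auto intro!: always_eventually)
  show "\<forall>\<^sub>F x in at_bot. avg q x \<le> q (x + 1 / 2)"
    using avg_upper[OF m b, of "1/2"] by (auto intro!: always_eventually)
  show "((\<lambda>x. q (x + - 1 / 2)) \<longlongrightarrow> L) at_bot"
    by (rule filterlim_compose[OF l shift_bot])
  show "((\<lambda>x. q (x + 1 / 2)) \<longlongrightarrow> L) at_bot"
    by (rule filterlim_compose[OF l shift_bot])
qed


lemma int_ind2:
  fixes q :: "real \<Rightarrow> real" and a b B :: real
  assumes qm: "q \<in> borel_measurable borel" and qb: "\<And>y. \<bar>q y\<bar> \<le> B"
  shows "integrable lborel (\<lambda>u. indicator {a..b} u * q u)"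
  using int_ind[OF qm qb, of a b 0] by simp

lemma shifted_window_bound:
  fixes q :: "real \<Rightarrow> real"
  assumes m: "mono q" and b: "\<And>y. \<bar>q y\<bar> \<le> B" and c: "c > 0" and n: "n \<ge> 0"
  shows "(LBINT x. (q (x + c) - q x) * indicator {-n..n} x) \<le> 2 * B * c"
proof -
  have qm: "q \<in> borel_measurable borel" using m by (rule borel_measurable_mono)
  have i1: "integrable lborel (\<lambda>x. indicator {-n..n} x * q (c + x))" by (rule int_ind[OF qm b])
  have i2: "integrable lborel (\<lambda>x. indicator {-n..n} x * q x)" by (rule int_ind2[OF qm b])
  have i3: "integrable lborel (\<lambda>x. indicator {-n+c..n+c} x * q x)" by (rule int_ind2[OF qm b])
  have sh: "(LBINT x. indicator {-n..n} x * q (c + x)) = (LBINT y. indicator {-n+c..n+c} y * q y)"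
  proof -
    have "(LBINT y. indicator {-n+c..n+c} y * q y) = (LBINT x. indicator {-n+c..n+c} (c + 1*x) * q (c + 1*x))"
      using lborel_integral_real_affine[of 1 "\<lambda>y. indicator {-n+c..n+c} y * q y" c] by simp
    also have "\<dots> = (LBINT x. indicator {-n..n} x * q (c + x))"
      by (rule Bochner_Integration.integral_cong) (auto simp: indicator_def)
    finally show ?thesis by simp
  qed
  have "(LBINT x. (q (x + c) - q x) * indicator {-n..n} x)
      = (LBINT x. indicator {-n..n} x * q (c + x)) - (LBINT x. indicator {-n..n} x * q x)"
    apply (subst Bochner_Integration.integral_diff[OF i1 i2, symmetric])
    by (rule Bochner_Integration.integral_cong) (auto simp: algebra_simps)
  also have "\<dots> = (LBINT y. indicator {-n+c..n+c} y * q y) - (LBINT x. indicator {-n..n} x * q x)"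
    using sh by simp
  also have "\<dots> = (LBINT y. (indicator {-n+c..n+c} y - indicator {-n..n} y) * q y)"
    apply (subst Bochner_Integration.integral_diff[OF i3 i2, symmetric])
    by (rule Bochner_Integration.integral_cong) (auto simp: algebra_simps)
  also have "\<dots> \<le> (LBINT y. B * indicator {n..n+c} y + B * indicator {-n..-n+c} y)"
  proof (rule integral_mono)
    show "integrable lborel (\<lambda>y. (indicator {-n+c..n+c} y - indicator {-n..n} y) * q y)"
      using Bochner_Integration.integrable_diff[OF i3 i2] by (simp add: algebra_simps)
    show "integrable lborel (\<lambda>y. B * indicator {n..n+c} y + B * indicator {-n..-n+c} y)"
      by (rule Bochner_Integration.integrable_add; rule integrable_mult_right; rule ind_int)
    fix y
    have qy: "\<bar>q y\<bar> \<le> B" by (rule b)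
    have B0: "B \<ge> 0" using b[of 0] by auto
    show "(indicator {-n+c..n+c} y - indicator {-n..n} y) * q y \<le> B * indicator {n..n+c} y + B * indicator {-n..-n+c} y"
    proof (cases "y \<in> {-n+c..n+c} \<longleftrightarrow> y \<in> {-n..n}")
      case True
      then have "indicator {-n+c..n+c} y = (indicator {-n..n} y :: real)"
        by (simp add: indicator_def)
      then show ?thesis using B0 by (simp add: indicator_def)
    next
      case False
      then consider "y \<in> {-n+c..n+c}" "y \<notin> {-n..n}" | "y \<notin> {-n+c..n+c}" "y \<in> {-n..n}" by blast
      then show ?thesis
      proof cases
        case 1
        then have "y \<in> {n..n+c}" using c n by auto
        then have e: "indicator {-n+c..n+c} y = (1::real)" "indicator {-n..n} y = (0::real)" "indicator {n..n+c} y = (1::real)"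
          using 1 by auto
        have X: "0 \<le> B * indicator {-n..-n+c} y" using B0 by simp
        have "q y \<le> B" using qy by auto
        then show ?thesis unfolding e using X by simp
      next
        case 2
        then have "y \<in> {-n..-n+c}" using c n by auto
        then have e: "indicator {-n+c..n+c} y = (0::real)" "indicator {-n..n} y = (1::real)" "indicator {-n..-n+c} y = (1::real)"
          using 2 by auto
        have X: "0 \<le> B * indicator {n..n+c} y" using B0 by simp
        have "- q y \<le> B" using qy by auto
        then show ?thesis unfolding e using X by simp
      qed
    qed
  qed
  also have "\<dots> = 2 * B * c"
    using c by (simp add: ind_int ind_integral)
  finally show ?thesis .
qed


lemma diff_integrable:
  fixes q :: "real \<Rightarrow> real"
  assumes m: "mono q" and b: "\<And>y. \<bar>q y\<bar> \<le> B" and c: "c > 0"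
  shows "integrable lborel (\<lambda>x. q (x + c) - q x)"
proof -
  have qm: "q \<in> borel_measurable borel" using m by (rule borel_measurable_mono)
  define g where "g = (\<lambda>x. q (x + c) - q x)"
  have g0: "g x \<ge> 0" for x unfolding g_def using c by (auto intro!: monoD[OF m])
  have gm: "g \<in> borel_measurable lborel" unfolding g_def using qm by measurable
  define F where "F = (\<lambda>(n::nat) x. g x * indicator {-real n..real n} x)"
  have Fi: "integrable lborel (F n)" for n
  proof -
    have "integrable lborel (\<lambda>x. indicator {-real n..real n} x * q (c + x))" by (rule int_ind[OF qm b])
    moreover have "integrable lborel (\<lambda>x. indicator {-real n..real n} x * q x)" by (rule int_ind2[OF qm b])
    ultimately have "integrable lborel (\<lambda>x. indicator {-real n..real n} x * q (c + x) - indicator {-real n..real n} x * q x)"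
      by (rule Bochner_Integration.integrable_diff)
    then show ?thesis unfolding F_def g_def by (simp add: algebra_simps)
  qed
  have inc: "AE x in lborel. incseq (\<lambda>n. F n x)"
  proof (rule AE_I2, rule incseq_SucI)
    fix x n show "F n x \<le> F (Suc n) x"
      unfolding F_def using g0[of x] by (auto simp: indicator_def)
  qed
  have lim: "AE x in lborel. (\<lambda>n. F n x) \<longlonglongrightarrow> g x"
  proof (rule AE_I2)
    fix x
    obtain N :: nat where "\<bar>x\<bar> \<le> real N" using real_arch_simple by blast
    then have "\<forall>n\<ge>N. F n x = g x"
      unfolding F_def by (auto simp: indicator_def abs_le_iff)
    then show "(\<lambda>n. F n x) \<longlonglongrightarrow> g x"
      by (intro tendsto_eventually) (auto simp: eventually_sequentially)
  qed
  have incI: "incseq (\<lambda>n. LBINT x. F n x)"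
  proof (rule incseq_SucI)
    fix n show "(LBINT x. F n x) \<le> (LBINT x. F (Suc n) x)"
      by (intro integral_mono[OF Fi Fi]) (auto simp: F_def indicator_def intro: g0)
  qed
  have bnd: "(LBINT x. F n x) \<le> 2 * B * c" for n
    unfolding F_def g_def by (rule shifted_window_bound[OF m b c]) simp
  obtain L where "(\<lambda>n. LBINT x. F n x) \<longlonglongrightarrow> L"
    using incseq_convergent[OF incI, of "2 * B * c"] bnd by blast
  then have "integrable lborel g"
    by (intro integrable_monotone_convergence[OF Fi inc lim _ gm])
  then show ?thesis unfolding g_def .
qed


lemma dq_integrable:
  fixes q :: "real \<Rightarrow> real"
  assumes m: "mono q" and b: "\<And>y. \<bar>q y\<bar> \<le> B"
  shows "integrable lborel (\<lambda>x. q (x + 1/2) - q (x - 1/2))"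
proof -
  have "integrable lborel (\<lambda>x. (\<lambda>y. q (y + 1) - q y) (-1/2 + 1 * x))"
    by (rule lborel_integrable_real_affine[OF diff_integrable[OF m b]]) auto
  then show ?thesis by (simp add: algebra_simps)
qed

lemma dq_nonneg:
  fixes q :: "real \<Rightarrow> real"
  assumes m: "mono q" and "\<bar>s\<bar> \<le> 1/2"
  shows "\<bar>q (x + s) - q x\<bar> \<le> q (x + 1/2) - q (x - 1/2)"
proof -
  have "q (x - 1/2) \<le> q (x + s)" "q (x + s) \<le> q (x + 1/2)"
       "q (x - 1/2) \<le> q x" "q x \<le> q (x + 1/2)"
    using assms(2) by (auto intro!: monoD[OF m])
  then show ?thesis by linarith
qed

lemma avg_diff_bound:
  fixes q :: "real \<Rightarrow> real"
  assumes m: "mono q" and b: "\<And>y. \<bar>q y\<bar> \<le> B"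
  shows "\<bar>q x - avg q x\<bar> \<le> q (x + 1/2) - q (x - 1/2)"
proof -
  have "q (x - 1/2) \<le> q x" "q x \<le> q (x + 1/2)" by (auto intro!: monoD[OF m])
  moreover have "q (x - 1/2) \<le> avg q x" "avg q x \<le> q (x + 1/2)"
    using avg_lower[OF m b, of "1/2" x] avg_upper[OF m b, of "1/2" x] by auto
  ultimately show ?thesis by linarith
qed

lemma avg_diff_integrable:
  fixes q :: "real \<Rightarrow> real"
  assumes m: "mono q" and b: "\<And>y. \<bar>q y\<bar> \<le> B"
  shows "integrable lborel (\<lambda>x. q x - avg q x)"
proof (rule Bochner_Integration.integrable_bound[OF dq_integrable[OF m b]])
  have "q \<in> borel_measurable borel" using m by (rule borel_measurable_mono)
  moreover have "avg q \<in> borel_measurable borel" using avg_mono[OF m b] by (rule borel_measurable_mono)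
  ultimately show "(\<lambda>x. q x - avg q x) \<in> borel_measurable lborel" by measurable
  show "AE x in lborel. norm (q x - avg q x) \<le> norm (q (x + 1 / 2) - q (x - 1 / 2))"
  proof (rule AE_I2)
    fix x
    have "\<bar>q x - avg q x\<bar> \<le> q (x + 1/2) - q (x - 1/2)" by (rule avg_diff_bound[OF m b])
    also have "\<dots> \<le> \<bar>q (x + 1/2) - q (x - 1/2)\<bar>" by (rule abs_ge_self)
    finally show "norm (q x - avg q x) \<le> norm (q (x + 1 / 2) - q (x - 1 / 2))" by simp
  qed
qed


lemma ab2:
  fixes y p Bp :: real
  assumes "\<bar>p\<bar> \<le> Bp"
  shows "norm (y * p) \<le> norm (Bp * norm y)" "norm (p * y) \<le> norm (Bp * norm y)"
proof -
  have B0: "Bp \<ge> 0" using assms by linarith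
  have "\<bar>y * p\<bar> = \<bar>y\<bar> * \<bar>p\<bar>" by (simp add: abs_mult)
  also have "\<dots> \<le> \<bar>y\<bar> * Bp" by (rule mult_left_mono) (use assms in auto)
  also have "\<dots> = \<bar>Bp * \<bar>y\<bar>\<bar>" using B0 by (simp add: abs_mult)
  finally show "norm (y * p) \<le> norm (Bp * norm y)" by simp
  then show "norm (p * y) \<le> norm (Bp * norm y)" by (simp add: mult.commute)
qed

lemma commut_integrable:
  fixes h p :: "real \<Rightarrow> real"
  assumes mh: "mono h" and bh: "\<And>y. \<bar>h y\<bar> \<le> Bh"
  assumes mp: "mono p" and bp: "\<And>y. \<bar>p y\<bar> \<le> Bp"
  shows "integrable lborel (\<lambda>x. avg h x * p x - h x * avg p x)"
proof -
  have hm: "h \<in> borel_measurable borel" using mh by (rule borel_measurable_mono)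
  have pm: "p \<in> borel_measurable borel" using mp by (rule borel_measurable_mono)
  have ahm: "avg h \<in> borel_measurable borel" using avg_mono[OF mh bh] by (rule borel_measurable_mono)
  have apm: "avg p \<in> borel_measurable borel" using avg_mono[OF mp bp] by (rule borel_measurable_mono)
  have i1: "integrable lborel (\<lambda>x. (h x - avg h x) * p x)"
    by (rule Bochner_Integration.integrable_bound[OF integrable_mult_right[OF integrable_norm[OF avg_diff_integrable[OF mh bh]], of Bp]])
       (use hm pm ahm in measurable, use ab2(1)[OF bp] in \<open>intro AE_I2\<close>)
  have i2: "integrable lborel (\<lambda>x. h x * (p x - avg p x))"
    by (rule Bochner_Integration.integrable_bound[OF integrable_mult_right[OF integrable_norm[OF avg_diff_integrable[OF mp bp]], of Bh]])
       (use hm pm apm in measurable, use ab2(2)[OF bh] in \<open>intro AE_I2\<close>)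
  have "integrable lborel (\<lambda>x. h x * (p x - avg p x) - (h x - avg h x) * p x)"
    using Bochner_Integration.integrable_diff[OF i2 i1] .
  then show ?thesis by (simp add: algebra_simps)
qed


lemma commut_zero:
  fixes h p :: "real \<Rightarrow> real"
  assumes mh: "mono h" and bh: "\<And>y. \<bar>h y\<bar> \<le> Bh"
  assumes mp: "mono p" and bp: "\<And>y. \<bar>p y\<bar> \<le> Bp"
  shows "(LBINT x. avg h x * p x - h x * avg p x) = 0"
proof -
  have hm[measurable]: "h \<in> borel_measurable borel" using mh by (rule borel_measurable_mono)
  have pm[measurable]: "p \<in> borel_measurable borel" using mp by (rule borel_measurable_mono)
  define G where "G = (\<lambda>x s. indicator {-1/2..1/2::real} s * (h (x + s) * p x - h x * p (x + s)))"
  have Gm: "(\<lambda>(x, s). G x s) \<in> borel_measurable (lborel \<Otimes>\<^sub>M lborel)"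
    unfolding G_def by measurable
  have Bh0: "Bh \<ge> 0" using bh[of 0] by auto
  have Bp0: "Bp \<ge> 0" using bp[of 0] by auto
  have Gb: "\<bar>G x s\<bar> \<le> (Bp * (h (x + 1/2) - h (x - 1/2)) + Bh * (p (x + 1/2) - p (x - 1/2))) * indicator {-1/2..1/2::real} s" for x s
  proof (cases "s \<in> {-1/2..1/2}")
    case True
    then have s: "\<bar>s\<bar> \<le> 1/2" by auto
    have "\<bar>h (x + s) * p x - h x * p (x + s)\<bar> = \<bar>(h (x + s) - h x) * p x + h x * (p x - p (x + s))\<bar>"
      by (simp add: algebra_simps)
    also have "\<dots> \<le> \<bar>h (x + s) - h x\<bar> * \<bar>p x\<bar> + \<bar>h x\<bar> * \<bar>p x - p (x + s)\<bar>"
      by (simp add: abs_mult[symmetric] abs_triangle_ineq)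
    also have "\<dots> \<le> (h (x + 1/2) - h (x - 1/2)) * Bp + Bh * (p (x + 1/2) - p (x - 1/2))"
    proof (rule add_mono)
      show "\<bar>h (x + s) - h x\<bar> * \<bar>p x\<bar> \<le> (h (x + 1/2) - h (x - 1/2)) * Bp"
        by (rule mult_mono[OF dq_nonneg[OF mh s] bp]) (use monoD[OF mh, of "x-1/2" "x+1/2"] in auto)
      show "\<bar>h x\<bar> * \<bar>p x - p (x + s)\<bar> \<le> Bh * (p (x + 1/2) - p (x - 1/2))"
        using mult_mono[OF bh dq_nonneg[OF mp s] Bh0] by (simp add: abs_minus_commute)
    qed
    finally show ?thesis using True unfolding G_def by (simp add: algebra_simps)
  next
    case False
    then show ?thesis unfolding G_def by simp
  qed
  define D where "D = (\<lambda>x. Bp * (h (x + 1/2) - h (x - 1/2)) + Bh * (p (x + 1/2) - p (x - 1/2)))"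
  have Dint: "integrable lborel D" unfolding D_def
    by (rule Bochner_Integration.integrable_add[OF integrable_mult_right[OF dq_integrable[OF mh bh]] integrable_mult_right[OF dq_integrable[OF mp bp]]])
  have Gi: "integrable lborel (G x)" for x
  proof (rule Bochner_Integration.integrable_bound[OF integrable_mult_left[OF ind_int, of "-1/2" "1/2" "D x"]])
    show "G x \<in> borel_measurable lborel" unfolding G_def by measurable
    show "AE y in lborel. norm (G x y) \<le> norm (indicat_real {- 1 / 2..1 / 2} y * D x)"
    proof (rule AE_I2)
      fix y
      have "\<bar>G x y\<bar> \<le> D x * indicat_real {- 1 / 2..1 / 2} y" using Gb unfolding D_def by simp
      also have "\<dots> \<le> \<bar>indicat_real {- 1 / 2..1 / 2} y * D x\<bar>" by (subst mult.commute) (rule abs_ge_self)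
      finally show "norm (G x y) \<le> norm (indicat_real {- 1 / 2..1 / 2} y * D x)" by simp
    qed
  qed
  have Gint: "integrable (lborel \<Otimes>\<^sub>M lborel) (\<lambda>(x, s). G x s)"
  proof (rule lborel_pair.Fubini_integrable)
    show "(\<lambda>(x, s). G x s) \<in> borel_measurable (lborel \<Otimes>\<^sub>M lborel)" by (rule Gm)
    show "AE x in lborel. integrable lborel (\<lambda>y. case (x, y) of (x, s) \<Rightarrow> G x s)"
      using Gi by auto
    show "integrable lborel (\<lambda>x. LBINT y. norm (case (x, y) of (x, s) \<Rightarrow> G x s))"
    proof (rule Bochner_Integration.integrable_bound[OF Dint])
      have "(\<lambda>(x, y). norm (G x y)) \<in> borel_measurable (lborel \<Otimes>\<^sub>M lborel)"
        using Gm by measurable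
      then show "(\<lambda>x. LBINT y. norm (case (x, y) of (x, s) \<Rightarrow> G x s)) \<in> borel_measurable lborel"
        using lborel.borel_measurable_lebesgue_integral[of "\<lambda>x y. norm (G x y)"] by simp
      show "AE x in lborel. norm (LBINT y. norm (case (x, y) of (x, s) \<Rightarrow> G x s)) \<le> norm (D x)"
      proof (rule AE_I2)
        fix x
        have "(LBINT y. norm (G x y)) \<le> (LBINT y. D x * indicator {-1/2..1/2::real} y)"
          by (rule integral_mono[OF integrable_norm[OF Gi] integrable_mult_right[OF ind_int]])
             (use Gb in \<open>simp add: D_def\<close>)
        also have "\<dots> = D x" by (simp add: ind_integral)
        finally have "(LBINT y. norm (G x y)) \<le> D x" .
        moreover have "0 \<le> (LBINT y. norm (G x y))" by simp
        ultimately show "norm (LBINT y. norm (case (x, y) of (x, s) \<Rightarrow> G x s)) \<le> norm (D x)"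
          by simp
      qed
    qed
  qed
  have F: "(LBINT s. LBINT x. G x s) = (LBINT x. LBINT s. G x s)"
    using lborel_pair.Fubini_integral[OF Gint] .
  have inner: "(LBINT s. G x s) = avg h x * p x - h x * avg p x" for x
  proof -
    have "(LBINT s. G x s) = (LBINT s. p x * (indicator {-1/2..1/2::real} s * h (x + s)) - h x * (indicator {-1/2..1/2::real} s * p (x + s)))"
      unfolding G_def by (rule Bochner_Integration.integral_cong) (auto simp: algebra_simps)
    also have "\<dots> = p x * avg h x - h x * avg p x"
      by (subst Bochner_Integration.integral_diff) (auto simp: avg_shift intro!: integrable_mult_right int_ind[OF hm bh] int_ind[OF pm bp])
    finally show ?thesis by simp
  qed
  define k where "k = (\<lambda>s. LBINT x. h (x + s) * p x - h x * p (x + s))"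
  have outer: "(LBINT x. G x s) = indicator {-1/2..1/2::real} s * k s" for s
    unfolding G_def k_def by simp
  have kodd: "k (-s) = - k s" for s
  proof -
    have "k (-s) = (LBINT x. (\<lambda>x. h (x + - s) * p x - h x * p (x + - s)) (s + 1 * x))"
      unfolding k_def using lborel_integral_real_affine[of 1 "\<lambda>x. h (x + - s) * p x - h x * p (x + - s)" s] by simp
    also have "\<dots> = (LBINT x. - (h (x + s) * p x - h x * p (x + s)))"
      by (rule Bochner_Integration.integral_cong) (auto simp: algebra_simps)
    also have "\<dots> = - k s" unfolding k_def by (rule Bochner_Integration.integral_minus)
    finally show ?thesis .
  qed
  define I where "I = (LBINT s. indicator {-1/2..1/2::real} s * k s)"
  have "I = (LBINT s. (\<lambda>s. indicator {-1/2..1/2::real} s * k s) (0 + (-1) * s))"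
    unfolding I_def using lborel_integral_real_affine[of "-1" "\<lambda>s. indicator {-1/2..1/2::real} s * k s" 0] by simp
  also have "\<dots> = (LBINT s. - (indicator {-1/2..1/2::real} s * k s))"
    by (rule Bochner_Integration.integral_cong) (auto simp: kodd indicator_def)
  also have "\<dots> = - I" unfolding I_def by simp
  finally have "I = 0" by simp
  then have "(LBINT s. LBINT x. G x s) = 0" unfolding outer I_def by simp
  then show ?thesis using F inner by simp
qed


definition Good :: "(real \<Rightarrow> real) \<Rightarrow> bool" where
  "Good q \<longleftrightarrow> mono q \<and> (q \<longlongrightarrow> -1) at_bot \<and> (q \<longlongrightarrow> 1) at_top \<and> integrable lborel (\<lambda>x. (Wsh x - q x)\<^sup>2)"

lemma mono_lim_bound:
  fixes q :: "real \<Rightarrow> real"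
  assumes m: "mono q" and lb: "(q \<longlongrightarrow> -1) at_bot" and lt: "(q \<longlongrightarrow> 1) at_top"
  shows "\<bar>q x\<bar> \<le> 1"
proof -
  have "q x \<le> 1"
  proof (rule tendsto_lowerbound[OF lt])
    show "\<forall>\<^sub>F i in at_top. q x \<le> q i"
      unfolding eventually_at_top_linorder by (rule exI[of _ x]) (auto intro: monoD[OF m])
  qed simp
  moreover have "-1 \<le> q x"
  proof (rule tendsto_upperbound[OF lb])
    show "\<forall>\<^sub>F i in at_bot. q i \<le> q x"
      unfolding eventually_at_bot_linorder by (rule exI[of _ x]) (auto intro: monoD[OF m])
  qed simp
  ultimately show ?thesis by linarith
qed

lemma Good_bound: "Good q \<Longrightarrow> \<bar>q x\<bar> \<le> 1"
  unfolding Good_def using mono_lim_bound by blast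

lemma Good_meas: "Good q \<Longrightarrow> q \<in> borel_measurable borel"
  unfolding Good_def using borel_measurable_mono by blast

lemma Wsh_mono: "mono Wsh"
  unfolding Wsh_def mono_def by (auto simp: sgn_real_def)

lemma Wsh_bound: "\<bar>Wsh x\<bar> \<le> 1"
  unfolding Wsh_def by (auto simp: sgn_real_def)

lemma Wsh_meas[measurable]: "Wsh \<in> borel_measurable borel"
  using Wsh_mono by (rule borel_measurable_mono)

lemma Wsh_pos: "x > 0 \<Longrightarrow> Wsh x = 1"
  unfolding Wsh_def by simp

lemma Wsh_neg: "x < 0 \<Longrightarrow> Wsh x = -1"
  unfolding Wsh_def by simp

lemma aS_bound: "\<bar>avg Wsh x\<bar> \<le> 1"
  by (rule avg_bound[OF Wsh_meas Wsh_bound])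

lemma aS_pos: "x > 1/2 \<Longrightarrow> avg Wsh x = 1"
  using avg_lower[OF Wsh_mono Wsh_bound, of "1/2" x] Wsh_pos[of "x - 1/2"] aS_bound[of x] by auto

lemma aS_neg: "x < -1/2 \<Longrightarrow> avg Wsh x = -1"
  using avg_upper[OF Wsh_mono Wsh_bound, of "1/2" x] Wsh_neg[of "x + 1/2"] aS_bound[of x] by auto

lemma aS_meas[measurable]: "avg Wsh \<in> borel_measurable borel"
  using avg_mono[OF Wsh_mono Wsh_bound] by (rule borel_measurable_mono)

lemma shift_int:
  fixes g :: "real \<Rightarrow> real"
  assumes "integrable lborel g"
  shows "integrable lborel (\<lambda>x. g (x + c))"
  using lborel_integrable_real_affine[OF assms, of 1 c] by (simp add: add.commute)

lemma good_avg_L2: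
  assumes G: "Good q"
  shows "integrable lborel (\<lambda>x. (avg q x - avg Wsh x)\<^sup>2)"
proof -
  have m: "mono q" and b: "\<And>y. \<bar>q y\<bar> \<le> 1" and gi: "integrable lborel (\<lambda>x. (Wsh x - q x)\<^sup>2)"
    using G Good_bound unfolding Good_def by auto
  define g where "g = (\<lambda>x. (Wsh x - q x)\<^sup>2)"
  have gi': "integrable lborel g" using gi unfolding g_def .
  have g0: "g x \<ge> 0" for x unfolding g_def by simp
  define R where "R = (\<lambda>x. g (x + -1/2) + g (x + 1/2) + 4 * indicator {-1/2..1/2::real} x)"
  have Ri: "integrable lborel R" unfolding R_def
    by (rule Bochner_Integration.integrable_add[OF Bochner_Integration.integrable_add[OF shift_int[OF gi'] shift_int[OF gi']] integrable_mult_right[OF ind_int]])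
  have amq: "avg q \<in> borel_measurable borel" using avg_mono[OF m b] by (rule borel_measurable_mono)
  have abq: "\<bar>avg q x\<bar> \<le> 1" for x using avg_bound[OF borel_measurable_mono[OF m] b] .
  show ?thesis
  proof (rule Bochner_Integration.integrable_bound[OF Ri])
    show "(\<lambda>x. (avg q x - avg Wsh x)\<^sup>2) \<in> borel_measurable lborel" using amq by measurable
    show "AE x in lborel. norm ((avg q x - avg Wsh x)\<^sup>2) \<le> norm (R x)"
    proof (rule AE_I2)
      fix x
      have R0: "R x \<ge> 0" unfolding R_def using g0 by simp
      have "(avg q x - avg Wsh x)\<^sup>2 \<le> R x"
      proof (cases "x > 1/2")
        case True
        have l: "q (x - 1/2) \<le> avg q x" using avg_lower[OF m b, of "1/2" x] by simp
        have "(avg q x - avg Wsh x)\<^sup>2 = (1 - avg q x)\<^sup>2" using aS_pos[OF True] by (simp add: power2_commute)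
        also have "\<dots> \<le> (1 - q (x - 1/2))\<^sup>2"
          by (rule power_mono) (use l abq[of x] in auto)
        also have "\<dots> = g (x + -1/2)" unfolding g_def using Wsh_pos[of "x - 1/2"] True by simp
        also have "\<dots> \<le> R x" unfolding R_def using g0 by simp
        finally show ?thesis .
      next
        case False
        show ?thesis
        proof (cases "x < -1/2")
          case True
          have u: "avg q x \<le> q (x + 1/2)" using avg_upper[OF m b, of "1/2" x] by simp
          have "(avg q x - avg Wsh x)\<^sup>2 = (avg q x + 1)\<^sup>2" using aS_neg[OF True] by simp
          also have "\<dots> \<le> (q (x + 1/2) + 1)\<^sup>2"
            by (rule power_mono) (use u abq[of x] in auto)
          also have "\<dots> = g (x + 1/2)" unfolding g_def using Wsh_neg[of "x + 1/2"] True
            by (simp add: power2_eq_square algebra_simps)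
          also have "\<dots> \<le> R x" unfolding R_def using g0 by simp
          finally show ?thesis .
        next
          case False
          then have "x \<in> {-1/2..1/2}" using \<open>\<not> x > 1/2\<close> by auto
          then have "R x \<ge> 4" unfolding R_def using g0 by simp
          moreover have "(avg q x - avg Wsh x)\<^sup>2 \<le> 4"
          proof -
            have "\<bar>avg q x - avg Wsh x\<bar> \<le> 2" using abq[of x] aS_bound[of x] by linarith
            then have "\<bar>avg q x - avg Wsh x\<bar>\<^sup>2 \<le> 2\<^sup>2" by (rule power_mono) simp
            then show ?thesis by simp
          qed
          ultimately show ?thesis by linarith
        qed
      qed
      then show "norm ((avg q x - avg Wsh x)\<^sup>2) \<le> norm (R x)" using R0 by simp
    qed
  qed
qed


lemma good_avg:
  assumes G: "Good q"
  shows "Good (avg q)"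
proof -
  have m: "mono q" and b: "\<And>y. \<bar>q y\<bar> \<le> 1" and lb: "(q \<longlongrightarrow> -1) at_bot" and lt: "(q \<longlongrightarrow> 1) at_top"
    using G Good_bound unfolding Good_def by auto
  have amq: "avg q \<in> borel_measurable borel" using avg_mono[OF m b] by (rule borel_measurable_mono)
  have L: "integrable lborel (\<lambda>x. (avg q x - avg Wsh x)\<^sup>2)" by (rule good_avg_L2[OF G])
  define R where "R = (\<lambda>x. 2 * (avg q x - avg Wsh x)\<^sup>2 + 8 * indicator {-1/2..1/2::real} x)"
  have Ri: "integrable lborel R" unfolding R_def
    by (rule Bochner_Integration.integrable_add[OF integrable_mult_right[OF L] integrable_mult_right[OF ind_int]])
  have "integrable lborel (\<lambda>x. (Wsh x - avg q x)\<^sup>2)"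
  proof (rule Bochner_Integration.integrable_bound[OF Ri])
    show "(\<lambda>x. (Wsh x - avg q x)\<^sup>2) \<in> borel_measurable lborel" using amq by measurable
    show "AE x in lborel. norm ((Wsh x - avg q x)\<^sup>2) \<le> norm (R x)"
    proof (rule AE_I2)
      fix x
      have R0: "R x \<ge> 0" unfolding R_def by simp
      have "(Wsh x - avg q x)\<^sup>2 \<le> R x"
      proof (cases "x \<in> {-1/2..1/2}")
        case True
        have "\<bar>Wsh x - avg q x\<bar> \<le> 2"
          using Wsh_bound[of x] avg_bound[OF borel_measurable_mono[OF m] b, of x] by linarith
        then have "\<bar>Wsh x - avg q x\<bar>\<^sup>2 \<le> 2\<^sup>2" by (rule power_mono) simp
        then have a: "(Wsh x - avg q x)\<^sup>2 \<le> 4" by (simp add: power2_abs)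
        have b: "0 \<le> 2 * (avg q x - avg Wsh x)\<^sup>2" by simp
        have c: "indicator {-1/2..1/2::real} x = (1::real)" using True by simp
        show ?thesis unfolding R_def c using a b by linarith
      next
        case False
        then have "avg Wsh x = Wsh x" using aS_pos aS_neg Wsh_pos Wsh_neg by auto
        then show ?thesis unfolding R_def by (simp add: power2_commute)
      qed
      then show "norm ((Wsh x - avg q x)\<^sup>2) \<le> norm (R x)" using R0 by simp
    qed
  qed
  then show ?thesis unfolding Good_def
    using avg_mono[OF m b] avg_lim_bot[OF m b lb] avg_lim_top[OF m b lt] by auto
qed

locale phictx =
  fixes Phi dPhi :: "real \<Rightarrow> real" and M :: real
  assumes M0: "M \<ge> 0"
  and lip: "\<And>x y. x \<in> {-1..1} \<Longrightarrow> y \<in> {-1..1} \<Longrightarrow> \<bar>dPhi x - dPhi y\<bar> \<le> M * \<bar>x - y\<bar>"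
  and tay: "\<And>x y. x \<in> {-1..1} \<Longrightarrow> y \<in> {-1..1} \<Longrightarrow> \<bar>Phi y - Phi x - dPhi x * (y - x)\<bar> \<le> M * (y - x)\<^sup>2"
  and dmono: "\<And>x y. x \<in> {-1..1} \<Longrightarrow> y \<in> {-1..1} \<Longrightarrow> x \<le> y \<Longrightarrow> dPhi x \<le> dPhi y"
  and dm1: "dPhi (-1) = -1" and dp1: "dPhi 1 = 1"
  and cPhi: "continuous_on UNIV Phi" and cdPhi: "continuous_on UNIV dPhi"
begin

lemma Phi_meas[measurable]: "Phi \<in> borel_measurable borel"
  using cPhi by (rule borel_measurable_continuous_onI)

lemma dPhi_meas[measurable]: "dPhi \<in> borel_measurable borel"
  using cdPhi by (rule borel_measurable_continuous_onI)

lemma dPhi_bound: assumes "\<bar>y\<bar> \<le> 1" shows "\<bar>dPhi y\<bar> \<le> 1"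
proof -
  have y: "-1 \<le> y" "y \<le> 1" using assms by auto
  have "dPhi (-1) \<le> dPhi y" "dPhi y \<le> dPhi 1" using dmono[of "-1" y] dmono[of y 1] y by auto
  then show ?thesis using dm1 dp1 by auto
qed

lemma good_comp:
  assumes G: "Good q"
  shows "Good (\<lambda>x. dPhi (avg q x))"
proof -
  have m: "mono q" and b: "\<And>y. \<bar>q y\<bar> \<le> 1" and lb: "(q \<longlongrightarrow> -1) at_bot" and lt: "(q \<longlongrightarrow> 1) at_top"
    using G Good_bound unfolding Good_def by auto
  have amq[measurable]: "avg q \<in> borel_measurable borel" using avg_mono[OF m b] by (rule borel_measurable_mono)
  have abq: "\<bar>avg q x\<bar> \<le> 1" for x using avg_bound[OF borel_measurable_mono[OF m] b] .
  have L: "integrable lborel (\<lambda>x. (avg q x - avg Wsh x)\<^sup>2)" by (rule good_avg_L2[OF G])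
  have mono_h: "mono (\<lambda>x. dPhi (avg q x))"
  proof (rule monoI)
    fix x y :: real assume "x \<le> y"
    then have "avg q x \<le> avg q y" using avg_mono[OF m b] by (auto dest: monoD)
    then show "dPhi (avg q x) \<le> dPhi (avg q y)" using abq[of x] abq[of y] by (intro dmono) auto
  qed
  have cont: "isCont dPhi y" for y using cdPhi by (simp add: continuous_on_eq_continuous_at)
  have l1: "((\<lambda>x. dPhi (avg q x)) \<longlongrightarrow> dPhi (-1)) at_bot"
    by (rule isCont_tendsto_compose[OF cont avg_lim_bot[OF m b lb]])
  have l2: "((\<lambda>x. dPhi (avg q x)) \<longlongrightarrow> dPhi 1) at_top"
    by (rule isCont_tendsto_compose[OF cont avg_lim_top[OF m b lt]])
  define R where "R = (\<lambda>x. M\<^sup>2 * (avg q x - avg Wsh x)\<^sup>2 + 4 * indicator {-1/2..1/2::real} x)"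
  have Ri: "integrable lborel R" unfolding R_def
    by (rule Bochner_Integration.integrable_add[OF integrable_mult_right[OF L] integrable_mult_right[OF ind_int]])
  have "integrable lborel (\<lambda>x. (Wsh x - dPhi (avg q x))\<^sup>2)"
  proof (rule Bochner_Integration.integrable_bound[OF Ri])
    show "(\<lambda>x. (Wsh x - dPhi (avg q x))\<^sup>2) \<in> borel_measurable lborel" by measurable
    show "AE x in lborel. norm ((Wsh x - dPhi (avg q x))\<^sup>2) \<le> norm (R x)"
    proof (rule AE_I2)
      fix x
      have R0: "R x \<ge> 0" unfolding R_def by simp
      have "(Wsh x - dPhi (avg q x))\<^sup>2 \<le> R x"
      proof (cases "x \<in> {-1/2..1/2}")
        case True
        have "\<bar>Wsh x - dPhi (avg q x)\<bar> \<le> 2"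
          using Wsh_bound[of x] dPhi_bound[OF abq[of x]] by linarith
        then have "\<bar>Wsh x - dPhi (avg q x)\<bar>\<^sup>2 \<le> 2\<^sup>2" by (rule power_mono) simp
        then have a: "(Wsh x - dPhi (avg q x))\<^sup>2 \<le> 4" by (simp add: power2_abs)
        have b: "0 \<le> M\<^sup>2 * (avg q x - avg Wsh x)\<^sup>2" by simp
        have c: "indicator {-1/2..1/2::real} x = (1::real)" using True by simp
        show ?thesis unfolding R_def c using a b by linarith
      next
        case False
        then have e: "avg Wsh x = Wsh x" and w: "Wsh x = dPhi (Wsh x)" and wb: "Wsh x \<in> {-1..1}"
          using aS_pos aS_neg Wsh_pos Wsh_neg dm1 dp1 by auto
        have "\<bar>Wsh x - dPhi (avg q x)\<bar> \<le> M * \<bar>Wsh x - avg q x\<bar>"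
        proof -
          have "avg q x \<in> {-1..1}" using abq[of x] by (auto simp: abs_le_iff)
          from lip[OF wb this] show ?thesis by (simp add: w[symmetric])
        qed
        then have "\<bar>Wsh x - dPhi (avg q x)\<bar>\<^sup>2 \<le> (M * \<bar>Wsh x - avg q x\<bar>)\<^sup>2" by (rule power_mono) simp
        then show ?thesis unfolding R_def using e False by (simp add: power_mult_distrib power2_commute)
      qed
      then show "norm ((Wsh x - dPhi (avg q x))\<^sup>2) \<le> norm (R x)" using R0 by simp
    qed
  qed
  then show ?thesis unfolding Good_def using mono_h l1 l2 dm1 dp1 by auto
qed

end


lemma sq_comb_int:
  fixes a b :: "real \<Rightarrow> real"
  assumes ia: "integrable lborel (\<lambda>x. (a x)\<^sup>2)" and ib: "integrable lborel (\<lambda>x. (b x)\<^sup>2)"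
    and ma[measurable]: "a \<in> borel_measurable borel" and mb[measurable]: "b \<in> borel_measurable borel"
  shows "integrable lborel (\<lambda>x. (c1 * a x + c2 * b x)\<^sup>2)"
proof (rule Bochner_Integration.integrable_bound[OF Bochner_Integration.integrable_add[OF integrable_mult_right[OF ia, of "2 * c1\<^sup>2"] integrable_mult_right[OF ib, of "2 * c2\<^sup>2"]]])
  show "(\<lambda>x. (c1 * a x + c2 * b x)\<^sup>2) \<in> borel_measurable lborel" by measurable
  show "AE x in lborel. norm ((c1 * a x + c2 * b x)\<^sup>2) \<le> norm (2 * c1\<^sup>2 * (a x)\<^sup>2 + 2 * c2\<^sup>2 * (b x)\<^sup>2)"
  proof (rule AE_I2)
    fix x
    have "(c1 * a x + c2 * b x)\<^sup>2 \<le> 2 * c1\<^sup>2 * (a x)\<^sup>2 + 2 * c2\<^sup>2 * (b x)\<^sup>2"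
    proof -
      have "0 \<le> (c1 * a x - c2 * b x)\<^sup>2" by simp
      then show ?thesis by (simp add: power2_eq_square algebra_simps)
    qed
    moreover have "0 \<le> 2 * c1\<^sup>2 * (a x)\<^sup>2 + 2 * c2\<^sup>2 * (b x)\<^sup>2" by simp
    ultimately show "norm ((c1 * a x + c2 * b x)\<^sup>2) \<le> norm (2 * c1\<^sup>2 * (a x)\<^sup>2 + 2 * c2\<^sup>2 * (b x)\<^sup>2)"
      by simp
  qed
qed

definition Fint :: "(real \<Rightarrow> real) \<Rightarrow> (real \<Rightarrow> real) \<Rightarrow> real \<Rightarrow> real" where
  "Fint Phi q x = (1/2 * (q x)\<^sup>2 - Phi (avg q x)) - (1/2 * (Wsh x)\<^sup>2 - Phi (avg Wsh x))"

lemma Lfun_Fint: "Lfun Phi q = (LBINT x. Fint Phi q x)"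
  unfolding Lfun_def Fint_def ..

context phictx begin

lemma F_integrable:
  assumes G: "Good f"
  shows "integrable lborel (Fint Phi f)"
proof -
  have m: "mono f" and b: "\<And>y. \<bar>f y\<bar> \<le> 1" and gi: "integrable lborel (\<lambda>x. (Wsh x - f x)\<^sup>2)"
    using G Good_bound unfolding Good_def by auto
  have fm[measurable]: "f \<in> borel_measurable borel" using m by (rule borel_measurable_mono)
  have afm[measurable]: "avg f \<in> borel_measurable borel" using avg_mono[OF m b] by (rule borel_measurable_mono)
  have abf: "\<bar>avg f x\<bar> \<le> 1" for x using avg_bound[OF fm b] .
  have L: "integrable lborel (\<lambda>x. (avg f x - avg Wsh x)\<^sup>2)" by (rule good_avg_L2[OF G])
  define T1 where "T1 = (\<lambda>x. 1/2 * (Wsh x - f x)\<^sup>2)"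
  define T2 where "T2 = (\<lambda>x. Wsh x * (f x - avg f x))"
  define T3 where "T3 = (\<lambda>x. (Wsh x - dPhi (avg Wsh x)) * (avg f x - avg Wsh x) + Wsh x * (avg Wsh x - Wsh x))"
  define T4 where "T4 = (\<lambda>x. Phi (avg f x) - Phi (avg Wsh x) - dPhi (avg Wsh x) * (avg f x - avg Wsh x))"
  have eq: "Fint Phi f = (\<lambda>x. T1 x + T2 x + T3 x - T4 x)"
    unfolding Fint_def T1_def T2_def T3_def T4_def by (rule ext) (simp add: power2_eq_square algebra_simps)
  have i1: "integrable lborel T1" unfolding T1_def using gi by simp
  have i2: "integrable lborel T2"
  proof (rule Bochner_Integration.integrable_bound[OF avg_diff_integrable[OF m b]])
    show "T2 \<in> borel_measurable lborel" unfolding T2_def by measurable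
    show "AE x in lborel. norm (T2 x) \<le> norm (f x - avg f x)"
    proof (rule AE_I2)
      fix x
      have "\<bar>Wsh x * (f x - avg f x)\<bar> \<le> 1 * \<bar>f x - avg f x\<bar>"
        unfolding abs_mult by (rule mult_right_mono[OF Wsh_bound]) simp
      then show "norm (T2 x) \<le> norm (f x - avg f x)" unfolding T2_def by simp
    qed
  qed
  have i3: "integrable lborel T3"
  proof (rule Bochner_Integration.integrable_bound[OF integrable_mult_right[OF ind_int, of 6 "-1/2" "1/2"]])
    show "T3 \<in> borel_measurable lborel" unfolding T3_def by measurable
    show "AE x in lborel. norm (T3 x) \<le> norm (6 * indicator {-1/2..1/2::real} x :: real)"
    proof (rule AE_I2)
      fix x
      show "norm (T3 x) \<le> norm (6 * indicator {-1/2..1/2::real} x :: real)"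
      proof (cases "x \<in> {-1/2..1/2}")
        case True
        have a1: "\<bar>Wsh x - dPhi (avg Wsh x)\<bar> \<le> 2"
          using Wsh_bound[of x] dPhi_bound[OF aS_bound[of x]] by linarith
        have a2: "\<bar>avg f x - avg Wsh x\<bar> \<le> 2" using abf[of x] aS_bound[of x] by linarith
        have a3: "\<bar>Wsh x * (avg Wsh x - Wsh x)\<bar> \<le> 2"
        proof -
          have "\<bar>Wsh x * (avg Wsh x - Wsh x)\<bar> \<le> 1 * 2" unfolding abs_mult
            by (rule mult_mono[OF Wsh_bound]) (use aS_bound[of x] Wsh_bound[of x] in auto)
          then show ?thesis by simp
        qed
        have "\<bar>(Wsh x - dPhi (avg Wsh x)) * (avg f x - avg Wsh x)\<bar> \<le> 2 * 2"
          unfolding abs_mult by (rule mult_mono[OF a1 a2]) auto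
        then have "\<bar>T3 x\<bar> \<le> 6" unfolding T3_def using a3 by (smt (verit) abs_triangle_ineq)
        then show ?thesis using True by simp
      next
        case False
        then have "avg Wsh x = Wsh x" and "dPhi (Wsh x) = Wsh x"
          using aS_pos aS_neg Wsh_pos Wsh_neg dm1 dp1 by auto
        then show ?thesis unfolding T3_def using False by simp
      qed
    qed
  qed
  have i4: "integrable lborel T4"
  proof (rule Bochner_Integration.integrable_bound[OF integrable_mult_right[OF L, of M]])
    show "T4 \<in> borel_measurable lborel" unfolding T4_def by measurable
    show "AE x in lborel. norm (T4 x) \<le> norm (M * (avg f x - avg Wsh x)\<^sup>2)"
    proof (rule AE_I2)
      fix x
      have "avg Wsh x \<in> {-1..1}" "avg f x \<in> {-1..1}" using aS_bound[of x] abf[of x] by (auto simp: abs_le_iff)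
      from tay[OF this] have "\<bar>T4 x\<bar> \<le> M * (avg f x - avg Wsh x)\<^sup>2" unfolding T4_def by simp
      then show "norm (T4 x) \<le> norm (M * (avg f x - avg Wsh x)\<^sup>2)" by simp
    qed
  qed
  show ?thesis unfolding eq
    by (intro Bochner_Integration.integrable_diff Bochner_Integration.integrable_add i1 i2 i3 i4)
qed

end


context phictx begin

lemma good_U:
  assumes Gf: "Good f" and GP: "Good P" and t: "0 \<le> t" "t \<le> 1"
  shows "Good (\<lambda>x. f x + t * (P x - f x))"
proof -
  have mf: "mono f" and lbf: "(f \<longlongrightarrow> -1) at_bot" and ltf: "(f \<longlongrightarrow> 1) at_top"
    and gf: "integrable lborel (\<lambda>x. (Wsh x - f x)\<^sup>2)" using Gf unfolding Good_def by auto
  have mP: "mono P" and lbP: "(P \<longlongrightarrow> -1) at_bot" and ltP: "(P \<longlongrightarrow> 1) at_top"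
    and gP: "integrable lborel (\<lambda>x. (Wsh x - P x)\<^sup>2)" using GP unfolding Good_def by auto
  have fm[measurable]: "f \<in> borel_measurable borel" using mf by (rule borel_measurable_mono)
  have Pm[measurable]: "P \<in> borel_measurable borel" using mP by (rule borel_measurable_mono)
  have mono: "mono (\<lambda>x. f x + t * (P x - f x))"
  proof (rule monoI)
    fix x y :: real assume "x \<le> y"
    then have "f x \<le> f y" "P x \<le> P y" using mf mP by (auto dest: monoD)
    then have "(1 - t) * f x \<le> (1 - t) * f y" "t * P x \<le> t * P y" using t
      by (auto intro: mult_left_mono)
    then show "f x + t * (P x - f x) \<le> f y + t * (P y - f y)" by (simp add: algebra_simps)
  qed
  have l1: "((\<lambda>x. f x + t * (P x - f x)) \<longlongrightarrow> -1 + t * (-1 - -1)) at_bot"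
    by (intro tendsto_intros lbf lbP)
  have l2: "((\<lambda>x. f x + t * (P x - f x)) \<longlongrightarrow> 1 + t * (1 - 1)) at_top"
    by (intro tendsto_intros ltf ltP)
  have "integrable lborel (\<lambda>x. ((1 - t) * (Wsh x - f x) + t * (Wsh x - P x))\<^sup>2)"
    by (rule sq_comb_int[OF gf gP]) measurable
  moreover have "(\<lambda>x. ((1 - t) * (Wsh x - f x) + t * (Wsh x - P x))\<^sup>2) = (\<lambda>x. (Wsh x - (f x + t * (P x - f x)))\<^sup>2)"
    by (rule ext) (simp add: algebra_simps)
  ultimately show ?thesis unfolding Good_def using mono l1 l2 by simp
qed

lemma var_ineq:
  assumes Gf: "Good f" and t: "0 \<le> t" "t \<le> 1"
  defines "h \<equiv> \<lambda>x. dPhi (avg f x)"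
  defines "P \<equiv> avg h"
  shows "integrable lborel (\<lambda>x. (P x - f x)\<^sup>2)"
    and "integrable lborel (\<lambda>x. (avg P x - avg f x)\<^sup>2)"
    and "Lfun Phi (\<lambda>x. f x + t * (P x - f x)) \<le> Lfun Phi f - t * (LBINT x. (P x - f x)\<^sup>2)
          + t\<^sup>2 * ((LBINT x. (P x - f x)\<^sup>2) / 2 + M * (LBINT x. (avg P x - avg f x)\<^sup>2))"
proof -
  have Gh: "Good h" unfolding h_def by (rule good_comp[OF Gf])
  have GP: "Good P" unfolding P_def by (rule good_avg[OF Gh])
  define U where "U = (\<lambda>x. f x + t * (P x - f x))"
  have GU: "Good U" unfolding U_def by (rule good_U[OF Gf GP t])
  have mf: "mono f" and bf: "\<And>y. \<bar>f y\<bar> \<le> 1" using Gf Good_bound unfolding Good_def by auto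
  have mh: "mono h" and bh: "\<And>y. \<bar>h y\<bar> \<le> 1" using Gh Good_bound unfolding Good_def by auto
  have mP: "mono P" and bP: "\<And>y. \<bar>P y\<bar> \<le> 1" using GP Good_bound unfolding Good_def by auto
  have bU: "\<And>y. \<bar>U y\<bar> \<le> 1" using GU Good_bound by auto
  have fm[measurable]: "f \<in> borel_measurable borel" using mf by (rule borel_measurable_mono)
  have hm[measurable]: "h \<in> borel_measurable borel" using mh by (rule borel_measurable_mono)
  have Pm[measurable]: "P \<in> borel_measurable borel" using mP by (rule borel_measurable_mono)
  have Um[measurable]: "U \<in> borel_measurable borel" using GU by (rule Good_meas)
  have afm[measurable]: "avg f \<in> borel_measurable borel" using avg_mono[OF mf bf] by (rule borel_measurable_mono)
  have aPm[measurable]: "avg P \<in> borel_measurable borel" using avg_mono[OF mP bP] by (rule borel_measurable_mono)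
  have ahm[measurable]: "avg h \<in> borel_measurable borel" using avg_mono[OF mh bh] by (rule borel_measurable_mono)
  have Vm[measurable]: "(\<lambda>y. P y - f y) \<in> borel_measurable borel" by measurable
  have Vb: "\<bar>P y - f y\<bar> \<le> 2" for y using bP[of y] bf[of y] by linarith
  have aPf: "avg (\<lambda>y. P y - f y) x = avg P x - avg f x" for x
    using avg_lin[OF Pm bP fm bf, of "-1" x] by simp
  have aU: "avg U x = avg f x + t * (avg P x - avg f x)" for x
    unfolding U_def using avg_lin[OF fm bf Vm Vb, of t x] aPf by simp
  have abf: "\<bar>avg f x\<bar> \<le> 1" for x using avg_bound[OF fm bf] .
  have abU: "\<bar>avg U x\<bar> \<le> 1" for x using avg_bound[OF Um bU] .
  have gf: "integrable lborel (\<lambda>x. (Wsh x - f x)\<^sup>2)" using Gf unfolding Good_def by auto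
  have gP: "integrable lborel (\<lambda>x. (Wsh x - P x)\<^sup>2)" using GP unfolding Good_def by auto
  have iV0: "integrable lborel (\<lambda>x. ((-1) * (Wsh x - f x) + 1 * (Wsh x - P x))\<^sup>2)"
    by (rule sq_comb_int[OF gf gP]) measurable
  have iV: "integrable lborel (\<lambda>x. (P x - f x)\<^sup>2)"
    using iV0 by (simp add: algebra_simps power2_commute)
  have LP: "integrable lborel (\<lambda>x. (avg P x - avg Wsh x)\<^sup>2)" by (rule good_avg_L2[OF GP])
  have Lf: "integrable lborel (\<lambda>x. (avg f x - avg Wsh x)\<^sup>2)" by (rule good_avg_L2[OF Gf])
  have iaV0: "integrable lborel (\<lambda>x. (1 * (avg P x - avg Wsh x) + (-1) * (avg f x - avg Wsh x))\<^sup>2)"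
    by (rule sq_comb_int[OF LP Lf]) measurable
  have iaV: "integrable lborel (\<lambda>x. (avg P x - avg f x)\<^sup>2)"
    using iaV0 by simp
  show "integrable lborel (\<lambda>x. (P x - f x)\<^sup>2)" by (rule iV)
  show "integrable lborel (\<lambda>x. (avg P x - avg f x)\<^sup>2)" by (rule iaV)
  define N where "N = (LBINT x. (P x - f x)\<^sup>2)"
  define K where "K = (LBINT x. (avg P x - avg f x)\<^sup>2)"
  define Q1 where "Q1 = (\<lambda>x. avg h x * P x - h x * avg P x)"
  define Q2 where "Q2 = (\<lambda>x. avg h x * f x - h x * avg f x)"
  define R2 where "R2 = (\<lambda>x. Phi (avg f x + t * (avg P x - avg f x)) - Phi (avg f x) - t * h x * (avg P x - avg f x))"
  have iQ1: "integrable lborel Q1" unfolding Q1_def by (rule commut_integrable[OF mh bh mP bP])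
  have iQ2: "integrable lborel Q2" unfolding Q2_def by (rule commut_integrable[OF mh bh mf bf])
  have zQ1: "integral\<^sup>L lborel Q1 = 0" unfolding Q1_def by (rule commut_zero[OF mh bh mP bP])
  have zQ2: "integral\<^sup>L lborel Q2 = 0" unfolding Q2_def by (rule commut_zero[OF mh bh mf bf])
  have R2b: "\<bar>R2 x\<bar> \<le> M * t\<^sup>2 * (avg P x - avg f x)\<^sup>2" for x
  proof -
    have "avg f x \<in> {-1..1}" "avg f x + t * (avg P x - avg f x) \<in> {-1..1}"
      using abf[of x] abU[of x] aU[of x] by (auto simp: abs_le_iff)
    note T = tay[OF this]
    have "\<bar>R2 x\<bar> = \<bar>Phi (avg f x + t * (avg P x - avg f x)) - Phi (avg f x) - dPhi (avg f x) * (avg f x + t * (avg P x - avg f x) - avg f x)\<bar>"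
      unfolding R2_def h_def by (simp add: algebra_simps)
    also have "\<dots> \<le> M * (avg f x + t * (avg P x - avg f x) - avg f x)\<^sup>2" by (rule T)
    also have "\<dots> = M * t\<^sup>2 * (avg P x - avg f x)\<^sup>2" by (simp add: power_mult_distrib)
    finally show ?thesis .
  qed
  have R2m[measurable]: "R2 \<in> borel_measurable borel" unfolding R2_def by measurable
  have iR2: "integrable lborel R2"
  proof (rule Bochner_Integration.integrable_bound[OF integrable_mult_right[OF iaV, of "M * t\<^sup>2"]])
    show "R2 \<in> borel_measurable lborel" by measurable
    show "AE x in lborel. norm (R2 x) \<le> norm (M * t\<^sup>2 * (avg P x - avg f x)\<^sup>2)"
      using R2b M0 by (intro AE_I2) (simp add: abs_mult)
  qed
  have R2low: "- (M * t\<^sup>2 * K) \<le> integral\<^sup>L lborel R2"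
  proof -
    have "(LBINT x. - (M * t\<^sup>2 * (avg P x - avg f x)\<^sup>2)) \<le> integral\<^sup>L lborel R2"
      by (rule integral_mono[OF integrable_minus[OF integrable_mult_right[OF iaV]] iR2])
         (use R2b in \<open>metis abs_le_iff minus_le_iff\<close>)
    then show ?thesis unfolding K_def by simp
  qed
  define D where "D = (\<lambda>x. - t * (P x - f x)\<^sup>2 + t * Q1 x - t * Q2 x + t\<^sup>2 / 2 * (P x - f x)\<^sup>2 - R2 x)"
  have Deq: "Fint Phi U x = Fint Phi f x + D x" for x
    unfolding Fint_def D_def Q1_def Q2_def R2_def aU
    by (simp add: U_def P_def power2_eq_square algebra_simps)
  have hQ1: "has_bochner_integral lborel Q1 0" using has_bochner_integral_integrable[OF iQ1] zQ1 by simp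
  have hQ2: "has_bochner_integral lborel Q2 0" using has_bochner_integral_integrable[OF iQ2] zQ2 by simp
  have hD: "has_bochner_integral lborel D (- t * N + t * 0 - t * 0 + t\<^sup>2 / 2 * N - integral\<^sup>L lborel R2)"
    unfolding D_def N_def
    by (intro has_bochner_integral_diff has_bochner_integral_add has_bochner_integral_mult_right
          has_bochner_integral_integrable iV iQ1 iQ2 iR2 has_bochner_integral_integral_eq)
       (simp_all add: hQ1 hQ2)
  have hF: "has_bochner_integral lborel (Fint Phi f) (Lfun Phi f)"
    unfolding Lfun_Fint by (rule has_bochner_integral_integrable[OF F_integrable[OF Gf]])
  have hU: "has_bochner_integral lborel (Fint Phi U) (Lfun Phi f + (- t * N + t * 0 - t * 0 + t\<^sup>2 / 2 * N - integral\<^sup>L lborel R2))"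
    unfolding Deq by (rule has_bochner_integral_add[OF hF hD])
  have "Lfun Phi U = Lfun Phi f + (- t * N + t * 0 - t * 0 + t\<^sup>2 / 2 * N - integral\<^sup>L lborel R2)"
    using has_bochner_integral_integral_eq[OF hU] by (simp only: Lfun_Fint[of Phi U])
  also have "\<dots> \<le> Lfun Phi f - t * N + t\<^sup>2 * (N / 2 + M * K)"
    using R2low by (simp add: algebra_simps)
  finally show "Lfun Phi (\<lambda>x. f x + t * (P x - f x)) \<le> Lfun Phi f - t * (LBINT x. (P x - f x)\<^sup>2)
          + t\<^sup>2 * ((LBINT x. (P x - f x)\<^sup>2) / 2 + M * (LBINT x. (avg P x - avg f x)\<^sup>2))"
    unfolding U_def N_def K_def .
qed

end


lemma phictx_exists:
  fixes Phi dPhi ddPhi :: "real \<Rightarrow> real"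
  assumes d1: "\<And>x. (Phi has_real_derivative dPhi x) (at x)"
    and d2: "\<And>x. (dPhi has_real_derivative ddPhi x) (at x)"
    and cont: "continuous_on UNIV ddPhi"
    and dm1: "dPhi (-1) = -1" and dp1: "dPhi 1 = 1"
    and nn: "\<And>x. x \<in> {-1..1} \<Longrightarrow> ddPhi x \<ge> 0"
  shows "\<exists>M. phictx Phi dPhi M"
proof -
  have "continuous_on {-1..1} (\<lambda>x. \<bar>ddPhi x\<bar>)"
    by (rule continuous_on_rabs[OF continuous_on_subset[OF cont]]) simp
  then obtain m where m: "m \<in> {-1..1::real}" "\<forall>y\<in>{-1..1}. \<bar>ddPhi y\<bar> \<le> \<bar>ddPhi m\<bar>"
    using continuous_attains_sup[of "{-1..1::real}" "\<lambda>x. \<bar>ddPhi x\<bar>"] by auto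
  define M where "M = \<bar>ddPhi m\<bar>"
  have M0: "M \<ge> 0" unfolding M_def by simp
  have Mb: "\<bar>ddPhi z\<bar> \<le> M" if "z \<in> {-1..1}" for z using m that unfolding M_def by auto
  have lip_aux: "\<bar>dPhi y - dPhi x\<bar> \<le> M * (y - x) \<and> dPhi x \<le> dPhi y"
    if xy: "x < y" "x \<in> {-1..1}" "y \<in> {-1..1}" for x y
  proof -
    obtain z where z: "x < z" "z < y" "dPhi y - dPhi x = (y - x) * ddPhi z"
      using MVT2[OF xy(1), of dPhi ddPhi] d2 by blast
    have zi: "z \<in> {-1..1}" using z xy by auto
    have "\<bar>dPhi y - dPhi x\<bar> = (y - x) * \<bar>ddPhi z\<bar>" using z xy by (simp add: abs_mult)
    also have "\<dots> \<le> (y - x) * M" by (rule mult_left_mono[OF Mb[OF zi]]) (use xy in auto)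
    finally have "\<bar>dPhi y - dPhi x\<bar> \<le> M * (y - x)" by (simp add: mult.commute)
    moreover have "dPhi x \<le> dPhi y"
    proof -
      have "0 \<le> (y - x) * ddPhi z" using xy nn[OF zi] by simp
      then show ?thesis using z by linarith
    qed
    ultimately show ?thesis by blast
  qed
  have lip: "\<bar>dPhi x - dPhi y\<bar> \<le> M * \<bar>x - y\<bar>" if "x \<in> {-1..1}" "y \<in> {-1..1}" for x y
  proof (cases x y rule: linorder_cases)
    case less
    have e: "\<bar>x - y\<bar> = y - x" using less by simp
    have "\<bar>dPhi x - dPhi y\<bar> = \<bar>dPhi y - dPhi x\<bar>" by (rule abs_minus_commute)
    then show ?thesis unfolding e using lip_aux[OF less that] by linarith
  next
    case equal then show ?thesis by simp
  next
    case greater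
    have e: "\<bar>x - y\<bar> = x - y" using greater by simp
    show ?thesis unfolding e using lip_aux[OF greater that(2,1)] by linarith
  qed
  have dmono: "dPhi x \<le> dPhi y" if "x \<in> {-1..1}" "y \<in> {-1..1}" "x \<le> y" for x y
    using lip_aux[of x y] that by (cases "x = y") auto
  have tay_aux: "\<bar>(b - a) * (dPhi z - dPhi c)\<bar> \<le> M * (b - a)\<^sup>2"
    if "a < b" "z \<in> {a..b}" "c \<in> {a..b}" "a \<in> {-1..1}" "b \<in> {-1..1}" for a b z c
  proof -
    have zc: "z \<in> {-1..1}" "c \<in> {-1..1}" using that by auto
    have "\<bar>z - c\<bar> \<le> b - a" using that by auto
    have "\<bar>(b - a) * (dPhi z - dPhi c)\<bar> = (b - a) * \<bar>dPhi z - dPhi c\<bar>" using that by (simp add: abs_mult)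
    also have "\<dots> \<le> (b - a) * (M * \<bar>z - c\<bar>)" by (rule mult_left_mono[OF lip[OF zc]]) (use that in auto)
    also have "\<dots> \<le> (b - a) * (M * (b - a))"
      by (rule mult_left_mono[OF mult_left_mono[OF \<open>\<bar>z - c\<bar> \<le> b - a\<close> M0]]) (use that in auto)
    also have "\<dots> = M * (b - a)\<^sup>2" by (simp add: power2_eq_square)
    finally show ?thesis .
  qed
  have tay: "\<bar>Phi y - Phi x - dPhi x * (y - x)\<bar> \<le> M * (y - x)\<^sup>2" if "x \<in> {-1..1}" "y \<in> {-1..1}" for x y
  proof (cases x y rule: linorder_cases)
    case less
    obtain z where z: "x < z" "z < y" "Phi y - Phi x = (y - x) * dPhi z"
      using MVT2[OF less, of Phi dPhi] d1 by blast
    have "Phi y - Phi x - dPhi x * (y - x) = (y - x) * (dPhi z - dPhi x)" using z by (simp add: algebra_simps)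
    also have "\<bar>\<dots>\<bar> \<le> M * (y - x)\<^sup>2" by (rule tay_aux) (use less z that in auto)
    finally show ?thesis .
  next
    case equal then show ?thesis by simp
  next
    case greater
    obtain z where z: "y < z" "z < x" "Phi x - Phi y = (x - y) * dPhi z"
      using MVT2[OF greater, of Phi dPhi] d1 by blast
    have "Phi y - Phi x - dPhi x * (y - x) = (x - y) * (dPhi x - dPhi z)" using z by (simp add: algebra_simps)
    also have "\<bar>\<dots>\<bar> \<le> M * (x - y)\<^sup>2" by (rule tay_aux) (use greater z that in auto)
    also have "\<dots> = M * (y - x)\<^sup>2" by (simp add: power2_commute)
    finally show ?thesis .
  qed
  have cPhi: "continuous_on UNIV Phi"
    by (rule continuous_at_imp_continuous_on) (use d1 DERIV_isCont in blast)
  have cdPhi: "continuous_on UNIV dPhi"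
    by (rule continuous_at_imp_continuous_on) (use d2 DERIV_isCont in blast)
  have "phictx Phi dPhi M"
    by (unfold_locales) (use M0 lip tay dmono dm1 dp1 cPhi cdPhi in auto)
  then show ?thesis by blast
qed


lemma Good_Ccone: "Good q \<Longrightarrow> q \<in> Ccone"
  unfolding Ccone_def Hspace_def Good_def
  using borel_measurable_mono by (auto simp: measurable_lborel1)

theorem lemma3p7:
  fixes Phi dPhi ddPhi :: "real \<Rightarrow> real" and W :: "real \<Rightarrow> real" and \<delta> :: real
  assumes d1: "\<And>x. (Phi has_real_derivative dPhi x) (at x)"
    and d2: "\<And>x. (dPhi has_real_derivative ddPhi x) (at x)"
    and cont: "continuous_on UNIV ddPhi"
    and "dPhi (-1) = -1" and "dPhi 1 = 1"
    and "\<And>x. x \<in> {-1..1} \<Longrightarrow> ddPhi x \<ge> 0"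
    and "Phi (-1) = Phi 1"
    and "ddPhi (-1) < 1" and "ddPhi 1 < 1"
    and "\<And>w. w \<in> {-1<..<1} \<Longrightarrow> integral {-1..w} (\<lambda>v. v - dPhi v) > 0"
    and WC: "W \<in> Ccone"
    and "\<delta> > 0"
    and locmin: "\<And>U. U \<in> Ccone \<Longrightarrow> L2norm (\<lambda>\<phi>. U \<phi> - W \<phi>) < \<delta> \<Longrightarrow> Lfun Phi W \<le> Lfun Phi U"
  shows "AE \<phi> in lborel. W \<phi> = Top dPhi W \<phi>"
proof -
  obtain M where "phictx Phi dPhi M" using phictx_exists[OF d1 d2 cont assms(4) assms(5) assms(6)] by blast
  then interpret phictx Phi dPhi M .
  have dpos: "\<delta> > 0" by fact
  from WC obtain f where Wm: "W \<in> borel_measurable lborel" and Wi: "integrable lborel (\<lambda>x. (Wsh x - W x)\<^sup>2)"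
    and mf: "mono f" and ae: "AE x in lborel. W x = f x" and lb: "(f \<longlongrightarrow> -1) at_bot" and lt: "(f \<longlongrightarrow> 1) at_top"
    unfolding Ccone_def Hspace_def by blast
  have Wm'[measurable]: "W \<in> borel_measurable borel" using Wm by simp
  have fm[measurable]: "f \<in> borel_measurable borel" using mf by (rule borel_measurable_mono)
  have "integrable lborel (\<lambda>x. (Wsh x - f x)\<^sup>2)"
  proof -
    have "integrable lborel (\<lambda>x. (Wsh x - W x)\<^sup>2) = integrable lborel (\<lambda>x. (Wsh x - f x)\<^sup>2)"
    proof (rule integrable_cong_AE)
      show "AE x in lborel. (Wsh x - W x)\<^sup>2 = (Wsh x - f x)\<^sup>2" using ae by eventually_elim simp
    qed (use Wm in simp_all)
    then show ?thesis using Wi by simp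
  qed
  then have Gf: "Good f" unfolding Good_def using mf lb lt by auto
  have bf: "\<And>y. \<bar>f y\<bar> \<le> 1" using Gf Good_bound by auto
  have afm[measurable]: "avg f \<in> borel_measurable borel" using avg_mono[OF mf bf] by (rule borel_measurable_mono)
  have avgW: "avg W = avg f"
  proof (rule ext)
    fix x show "avg W x = avg f x"
      unfolding avg_def
    proof (rule set_lebesgue_integral_cong_AE)
      show "AE s\<in>{x - 1 / 2..x + 1 / 2} in lborel. W s = f s" using ae by eventually_elim simp
    qed (use Wm in simp_all)
  qed
  define h where "h = (\<lambda>x. dPhi (avg f x))"
  define P where "P = avg h"
  have TopW: "Top dPhi W = P" unfolding Top_def avgW P_def h_def ..
  have LW: "Lfun Phi W = Lfun Phi f"
    unfolding Lfun_def avgW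
  proof (rule integral_cong_AE)
    show "AE x in lborel. 1 / 2 * (W x)\<^sup>2 - Phi (avg f x) - (1 / 2 * (Wsh x)\<^sup>2 - Phi (avg Wsh x)) =
        1 / 2 * (f x)\<^sup>2 - Phi (avg f x) - (1 / 2 * (Wsh x)\<^sup>2 - Phi (avg Wsh x))"
      using ae by eventually_elim simp
    show "(\<lambda>x. 1 / 2 * (W x)\<^sup>2 - Phi (avg f x) - (1 / 2 * (Wsh x)\<^sup>2 - Phi (avg Wsh x))) \<in> borel_measurable lborel"
      by measurable
    show "(\<lambda>x. 1 / 2 * (f x)\<^sup>2 - Phi (avg f x) - (1 / 2 * (Wsh x)\<^sup>2 - Phi (avg Wsh x))) \<in> borel_measurable lborel"
      by measurable
  qed
  have Pm[measurable]: "P \<in> borel_measurable borel"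
  proof -
    have "Good P" unfolding P_def h_def by (rule good_avg[OF good_comp[OF Gf]])
    then show ?thesis by (rule Good_meas)
  qed
  have vi: "integrable lborel (\<lambda>x. (P x - f x)\<^sup>2)" "integrable lborel (\<lambda>x. (avg P x - avg f x)\<^sup>2)"
    using var_ineq(1,2)[OF Gf order_refl zero_le_one] unfolding P_def h_def by auto
  have vin: "\<And>t. 0 \<le> t \<Longrightarrow> t \<le> 1 \<Longrightarrow> Lfun Phi (\<lambda>x. f x + t * (P x - f x)) \<le> Lfun Phi f - t * (LBINT x. (P x - f x)\<^sup>2)
          + t\<^sup>2 * ((LBINT x. (P x - f x)\<^sup>2) / 2 + M * (LBINT x. (avg P x - avg f x)\<^sup>2))"
    using var_ineq(3)[OF Gf] unfolding P_def h_def by auto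
  define N where "N = (LBINT x. (P x - f x)\<^sup>2)"
  define K where "K = (LBINT x. (avg P x - avg f x)\<^sup>2)"
  have N0: "N \<ge> 0" unfolding N_def by simp
  have K0: "K \<ge> 0" unfolding K_def by simp
  define C where "C = N / 2 + M * K"
  have C0: "C \<ge> 0" unfolding C_def using N0 K0 M0 by simp
  have key: "t * N \<le> t\<^sup>2 * C" if t: "0 < t" "t \<le> 1" "t * sqrt N < \<delta>" for t
  proof -
    define U where "U = (\<lambda>x. f x + t * (P x - f x))"
    have GU: "Good U" unfolding U_def P_def h_def
      by (rule good_U[OF Gf good_avg[OF good_comp[OF Gf]]]) (use t in auto)
    have UC: "U \<in> Ccone" by (rule Good_Ccone[OF GU])
    have "(LBINT x. (U x - W x)\<^sup>2) = (LBINT x. t\<^sup>2 * (P x - f x)\<^sup>2)"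
    proof (rule integral_cong_AE)
      have "U \<in> borel_measurable borel" using GU by (rule Good_meas)
      then show "(\<lambda>x. (U x - W x)\<^sup>2) \<in> borel_measurable lborel" by measurable
      show "AE x in lborel. (U x - W x)\<^sup>2 = t\<^sup>2 * (P x - f x)\<^sup>2"
        using ae by eventually_elim (simp add: U_def power2_eq_square algebra_simps)
      show "(\<lambda>x. t\<^sup>2 * (P x - f x)\<^sup>2) \<in> borel_measurable lborel" by measurable
    qed
    also have "\<dots> = t\<^sup>2 * N" unfolding N_def by simp
    finally have "L2norm (\<lambda>x. U x - W x) = sqrt (t\<^sup>2 * N)" unfolding L2norm_def by simp
    also have "\<dots> = t * sqrt N" using t by (simp add: real_sqrt_mult)
    finally have "L2norm (\<lambda>x. U x - W x) < \<delta>" using t by simp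
    then have "Lfun Phi W \<le> Lfun Phi U" by (rule locmin[OF UC])
    also have "\<dots> \<le> Lfun Phi f - t * N + t\<^sup>2 * C"
      unfolding U_def N_def C_def K_def using vin[of t] t by simp
    finally show ?thesis using LW by simp
  qed
  have "N = 0"
  proof (rule ccontr)
    assume "N \<noteq> 0"
    then have Np: "N > 0" using N0 by simp
    then have sN: "sqrt N > 0" by simp
    define t where "t = min 1 (min (\<delta> / (2 * sqrt N)) (N / (2 * C + 1)))"
    have tp: "t > 0" unfolding t_def using dpos sN Np C0 by simp
    have t1: "t \<le> 1" unfolding t_def by simp
    have "t \<le> \<delta> / (2 * sqrt N)" unfolding t_def by simp
    then have "t * (2 * sqrt N) \<le> \<delta>" using sN by (simp add: pos_le_divide_eq)
    moreover have "t * sqrt N = t * (2 * sqrt N) / 2" by simp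
    ultimately have tl: "t * sqrt N < \<delta>" using dpos by linarith
    have "t \<le> N / (2 * C + 1)" unfolding t_def by simp
    then have "t * (2 * C + 1) \<le> N" using C0 by (simp add: pos_le_divide_eq)
    moreover have "t * C < t * (2 * C + 1)" using tp C0 by (intro mult_strict_left_mono) auto
    ultimately have "t * C < N" by linarith
    then have "t * (t * C) < t * N" using tp by (intro mult_strict_left_mono)
    moreover have "t * N \<le> t\<^sup>2 * C" by (rule key[OF tp t1 tl])
    ultimately show False by (simp add: power2_eq_square algebra_simps)
  qed
  then have "AE x in lborel. (P x - f x)\<^sup>2 = 0"
    using integral_nonneg_eq_0_iff_AE[OF vi(1)] unfolding N_def by simp
  then show ?thesis unfolding TopW using ae by eventually_elim simp
qed


end
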